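(* Fix $n=(n_{ji}: j\in i)$ with nonnegative integer entries. For $c\in\mathbb{N}$ let $M(nc,\cdot)$ be the network process started from $M(nc,0)=nc$ and let $\bar M(nc,t)=c^{-1}M(nc,ct)$. Then the family of processes $\{(\bar M(nc,t))_{t\ge0}\}_{c}$ is tight; more precisely, for every coordinate $(j,i)$ and every $T,\eta,\epsilon>0$ there exist $\delta>0$ and $c_0$ such that for all $c\ge c_0$, $\Pr\{\omega_{\bar M_{ji}(nc,\cdot)}(\delta)>\eta\}<\epsilon$, where $\omega_f(\delta)=\sup\{|f(t)-f(s)|: s,t\le T, |t-s|<\delta\}$.
   Context: Closed multiclass network: finite queue set $\mathcal{J}$, finite route set $\mathcal{I}$, each route $i$ a subset of $\mathcal{J}$ with a cyclic visiting order (each queue at most once), rates $\mu_{ji}>0$ for $j\in i$. The network process $M(t)=(M_{ji}(t): j\in i)$ is the continuous-time Markov chain in which, for each $i$ and $j\in i$ with $M_j>0$ (where $M_j=\sum_{i: j\in i}M_{ji}$), a route-$i$ customer leaves queue $j$ and joins the next queue on route $i$ at rate $\mu_{ji}M_{ji}/M_j$ (unit-rate processor sharing with exponential services). The number of route-$i$ customers is preserved. *)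

theory Defs
  imports "HOL-Probability.Probability"
begin

text \<open>Routes: route i is a (distinct) list of queues giving the cyclic visiting order.
  States: x :: 'q => 'r => nat, x j i = number of route-i customers at queue j.\<close>

definition nxt :: "'q list \<Rightarrow> 'q \<Rightarrow> 'q" where
  "nxt xs j = hd (tl (dropWhile (\<lambda>y. y \<noteq> j) (xs @ xs)))"

definition qlen :: "('q \<Rightarrow> 'r::finite \<Rightarrow> nat) \<Rightarrow> 'q \<Rightarrow> nat" where
  "qlen x j = (\<Sum>i\<in>UNIV. x j i)"

definition move :: "('r \<Rightarrow> 'q list) \<Rightarrow> ('q \<Rightarrow> 'r \<Rightarrow> nat) \<Rightarrow> 'q \<Rightarrow> 'r \<Rightarrow> ('q \<Rightarrow> 'r \<Rightarrow> nat)" where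
  "move route x j i = (\<lambda>q r. if r = i
      then x q r - (if q = j then 1 else 0) + (if q = nxt (route i) j then 1 else 0)
      else x q r)"

text \<open>Uniformisation rate: an upper bound for the total jump rate in every state.\<close>
definition unif_rate :: "('r::finite \<Rightarrow> 'q list) \<Rightarrow> ('q \<Rightarrow> 'r \<Rightarrow> real) \<Rightarrow> real" where
  "unif_rate route \<mu> = (\<Sum>i\<in>UNIV. \<Sum>j\<in>set (route i). \<mu> j i)"

definition event_pmf :: "('r::finite \<Rightarrow> 'q list) \<Rightarrow> ('q \<Rightarrow> 'r \<Rightarrow> real) \<Rightarrow> ('q \<times> 'r) pmf" where
  "event_pmf route \<mu> = embed_pmf (\<lambda>(j,i). if j \<in> set (route i) then \<mu> j i / unif_rate route \<mu> else 0)"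

text \<open>One step of the uniformised jump chain: candidate event (j,i) is accepted with
  probability M_ji / M_j (via the uniform variable u), giving the rate mu_ji M_ji / M_j.\<close>
definition step :: "('r::finite \<Rightarrow> 'q list) \<Rightarrow> ('q \<Rightarrow> 'r \<Rightarrow> nat) \<Rightarrow> 'q \<times> 'r \<Rightarrow> real \<Rightarrow> ('q \<Rightarrow> 'r \<Rightarrow> nat)" where
  "step route x e u = (case e of (j, i) \<Rightarrow>
      if j \<in> set (route i) \<and> 0 < x j i \<and> u < real (x j i) / real (qlen x j)
      then move route x j i else x)"

definition mark_measure :: "('r::finite \<Rightarrow> 'q list) \<Rightarrow> ('q \<Rightarrow> 'r \<Rightarrow> real) \<Rightarrow> (real \<times> ('q \<times> 'r) \<times> real) measure" where
  "mark_measure route \<mu> =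
     density lborel (exponential_density (unif_rate route \<mu>)) \<Otimes>\<^sub>M
       (measure_pmf (event_pmf route \<mu>) \<Otimes>\<^sub>M uniform_measure lborel {0..1})"

definition noise_space :: "('r::finite \<Rightarrow> 'q list) \<Rightarrow> ('q \<Rightarrow> 'r \<Rightarrow> real) \<Rightarrow> (real \<times> ('q \<times> 'r) \<times> real) stream measure" where
  "noise_space route \<mu> = stream_space (mark_measure route \<mu>)"

primrec jchain :: "('r::finite \<Rightarrow> 'q list) \<Rightarrow> ('q \<Rightarrow> 'r \<Rightarrow> nat) \<Rightarrow> (real \<times> ('q \<times> 'r) \<times> real) stream \<Rightarrow> nat \<Rightarrow> ('q \<Rightarrow> 'r \<Rightarrow> nat)" where
  "jchain route x0 \<omega> 0 = x0"
| "jchain route x0 \<omega> (Suc k) = step route (jchain route x0 \<omega> k) (fst (snd (\<omega> !! k))) (snd (snd (\<omega> !! k)))"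

definition jump_time :: "(real \<times> 'e) stream \<Rightarrow> nat \<Rightarrow> real" where
  "jump_time \<omega> k = (\<Sum>l<k. fst (\<omega> !! l))"

definition njumps :: "(real \<times> 'e) stream \<Rightarrow> real \<Rightarrow> nat" where
  "njumps \<omega> t = card {k. jump_time \<omega> (Suc k) \<le> t}"

definition net_proc :: "('r::finite \<Rightarrow> 'q list) \<Rightarrow> ('q \<Rightarrow> 'r \<Rightarrow> nat) \<Rightarrow> (real \<times> ('q \<times> 'r) \<times> real) stream \<Rightarrow> real \<Rightarrow> ('q \<Rightarrow> 'r \<Rightarrow> nat)" where
  "net_proc route x0 \<omega> t = jchain route x0 \<omega> (njumps \<omega> t)"

definition Mbar :: "('r::finite \<Rightarrow> 'q list) \<Rightarrow> ('q \<Rightarrow> 'r \<Rightarrow> nat) \<Rightarrow> nat \<Rightarrow> (real \<times> ('q \<times> 'r) \<times> real) stream \<Rightarrow> real \<Rightarrow> 'q \<Rightarrow> 'r \<Rightarrow> real" where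
  "Mbar route n c \<omega> t j i = real (net_proc route (\<lambda>q r. c * n q r) \<omega> (real c * t) j i) / real c"

definition modulus :: "(real \<Rightarrow> real) \<Rightarrow> real \<Rightarrow> real \<Rightarrow> real" where
  "modulus f T \<delta> = Sup {\<bar>f t - f s\<bar> | s t. s \<in> {0..T} \<and> t \<in> {0..T} \<and> \<bar>t - s\<bar> < \<delta>}"

end

theory Submission imports Defs "HOL-Real_Asymp.Real_Asymp" begin


lemma (in prob_space) nn_sdrop:
  assumes [measurable]: "f \<in> borel_measurable (stream_space M)"
  shows "(\<integral>\<^sup>+\<omega>. f (sdrop K \<omega>) \<partial>stream_space M) = (\<integral>\<^sup>+\<omega>. f \<omega> \<partial>stream_space M)"
proof (induction K)
  case 0 then show ?case by simp
next
  case (Suc K)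
  have "(\<integral>\<^sup>+\<omega>. f (sdrop (Suc K) \<omega>) \<partial>stream_space M)
     = (\<integral>\<^sup>+x. (\<integral>\<^sup>+X. f (sdrop (Suc K) (x ## X)) \<partial>stream_space M) \<partial>M)"
    by (rule nn_integral_stream_space) measurable
  also have "\<dots> = (\<integral>\<^sup>+x. (\<integral>\<^sup>+\<omega>. f \<omega> \<partial>stream_space M) \<partial>M)"
    using Suc by simp
  also have "\<dots> = (\<integral>\<^sup>+\<omega>. f \<omega> \<partial>stream_space M)"
    by (simp add: emeasure_space_1)
  finally show ?case .
qed

lemma jump_time_Suc: "jump_time (x ## X) (Suc m) = fst x + jump_time X m"
  unfolding jump_time_def sum.lessThan_Suc_shift by simp

lemma measurable_jump_time[measurable]:
  assumes [measurable]: "fst \<in> borel_measurable M"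
  shows "(\<lambda>\<omega>. jump_time \<omega> m) \<in> borel_measurable (stream_space M)"
  unfolding jump_time_def by measurable

lemma nn_exp_jump_time:
  fixes M :: "(real \<times> 'e) measure"
  assumes P: "prob_space M" and [measurable]: "fst \<in> borel_measurable M"
   and q: "(\<integral>\<^sup>+x. ennreal (exp (- a * fst x)) \<partial>M) = ennreal q"
  shows "(\<integral>\<^sup>+\<omega>. ennreal (exp (- a * jump_time \<omega> m)) \<partial>stream_space M) = ennreal q ^ m"
proof (induction m)
  interpret prob_space M by (rule P)
  case 0 then show ?case by (simp add: jump_time_def prob_space_stream_space prob_space.emeasure_space_1)
next
  case (Suc m)
  interpret prob_space M by (rule P)
  have mj[measurable]: "(\<lambda>\<omega>. jump_time \<omega> m) \<in> borel_measurable (stream_space M)"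
    by (rule measurable_jump_time) measurable
  have e: "\<And>x X. ennreal (exp (- a * jump_time (x ## X) (Suc m))) =
     ennreal (exp (- a * fst x)) * ennreal (exp (- a * jump_time X m))"
    by (simp add: jump_time_Suc ring_distribs exp_add[symmetric] ennreal_mult[symmetric])
  have "(\<integral>\<^sup>+\<omega>. ennreal (exp (- a * jump_time \<omega> (Suc m))) \<partial>stream_space M)
     = (\<integral>\<^sup>+x. (\<integral>\<^sup>+X. ennreal (exp (- a * jump_time (x ## X) (Suc m))) \<partial>stream_space M) \<partial>M)"
    by (rule nn_integral_stream_space) measurable
  also have "\<dots> = (\<integral>\<^sup>+x. ennreal (exp (- a * fst x)) * (\<integral>\<^sup>+X. ennreal (exp (- a * jump_time X m)) \<partial>stream_space M) \<partial>M)"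
    unfolding e by (intro nn_integral_cong nn_integral_cmult measurable_compose[OF mj]) simp
  also have "\<dots> = ennreal q * ennreal q ^ m"
    using Suc q by (simp add: nn_integral_multc)
  finally show ?case by simp
qed



lemma mark_prob:
  assumes "0 < unif_rate route \<mu>"
  shows "prob_space (mark_measure route \<mu>)"
  unfolding mark_measure_def
  by (intro prob_space_pair prob_space_exponential_density assms prob_space_measure_pmf
        prob_space_uniform_measure) auto

lemma mark_fst: "fst \<in> borel_measurable (mark_measure route \<mu>)"
  unfolding mark_measure_def by measurable

lemma nn_fst_pair:
  assumes "prob_space M2" and [measurable]: "g \<in> borel_measurable M1"
  shows "(\<integral>\<^sup>+z. g (fst z) \<partial>(M1 \<Otimes>\<^sub>M M2)) = (\<integral>\<^sup>+x. g x \<partial>M1)"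
proof -
  interpret prob_space M2 by fact
  have "(\<integral>\<^sup>+z. g (fst z) \<partial>(M1 \<Otimes>\<^sub>M M2)) = (\<integral>\<^sup>+ x. \<integral>\<^sup>+ y. g (fst (x, y)) \<partial>M2 \<partial>M1)"
    by (rule nn_integral_fst[symmetric]) measurable
  also have "\<dots> = (\<integral>\<^sup>+x. g x \<partial>M1)"
    by (simp add: emeasure_space_1)
  finally show ?thesis .
qed

lemma nn_exp_density:
  fixes l a :: real
  assumes "0 < l" "0 \<le> a"
  shows "(\<integral>\<^sup>+x. ennreal (exp (- a * x)) \<partial>density lborel (exponential_density l)) = ennreal (l / (l + a))"
proof -
  have "(\<integral>\<^sup>+x. ennreal (exp (- a * x)) \<partial>density lborel (exponential_density l))
      = (\<integral>\<^sup>+x. ennreal (exponential_density l x) * ennreal (exp (- a * x)) \<partial>lborel)"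
    by (subst nn_integral_density) auto
  also have "\<dots> = (\<integral>\<^sup>+x. ennreal (l / (l + a)) * ennreal (exponential_density (l + a) x) \<partial>lborel)"
    using assms
    by (intro nn_integral_cong)
       (auto simp: exponential_density_def ennreal_mult[symmetric] exp_add[symmetric] field_simps)
  also have "\<dots> = ennreal (l / (l + a)) * (\<integral>\<^sup>+x. ennreal (exponential_density (l + a) x) \<partial>lborel)"
    by (rule nn_integral_cmult) auto
  also have "(\<integral>\<^sup>+x. ennreal (exponential_density (l + a) x) \<partial>lborel) = 1"
  proof -
    interpret prob_space "density lborel (exponential_density (l + a))"
      using assms by (intro prob_space_exponential_density) auto
    have "emeasure (density lborel (exponential_density (l + a))) UNIV = 1"
      using emeasure_space_1 by simp
    then show ?thesis by (simp add: emeasure_density)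
  qed
  finally show ?thesis by simp
qed

lemma mark_exp:
  assumes "0 < unif_rate route \<mu>" "0 \<le> a"
  shows "(\<integral>\<^sup>+x. ennreal (exp (- a * fst x)) \<partial>mark_measure route \<mu>)
     = ennreal (unif_rate route \<mu> / (unif_rate route \<mu> + a))"
  unfolding mark_measure_def
  apply (subst nn_fst_pair[where g = "\<lambda>x. ennreal (exp (- a * x))"])
  apply (intro prob_space_pair prob_space_measure_pmf prob_space_uniform_measure; simp)
   apply simp
  apply (rule nn_exp_density[OF assms])
  done

lemma mark_AE_nonneg:
  assumes "0 < unif_rate route \<mu>"
  shows "AE x in mark_measure route \<mu>. 0 \<le> fst x"
proof -
  let ?M1 = "density lborel (exponential_density (unif_rate route \<mu>))"
  let ?M2 = "measure_pmf (event_pmf route \<mu>) \<Otimes>\<^sub>M uniform_measure lborel {0..1::real}"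
  interpret M1: prob_space ?M1 using assms by (rule prob_space_exponential_density)
  interpret M2: prob_space ?M2
    by (intro prob_space_pair prob_space_measure_pmf prob_space_uniform_measure) auto
  interpret pair_prob_space ?M1 ?M2 ..
  have "AE x in ?M1. 0 \<le> x"
    by (subst AE_density) (auto simp: exponential_density_def)
  moreover have "{x \<in> space (?M1 \<Otimes>\<^sub>M ?M2). 0 \<le> fst x} = fst -` {0..} \<inter> space (?M1 \<Otimes>\<^sub>M ?M2)"
    by auto
  moreover have "fst -` {0..} \<inter> space (?M1 \<Otimes>\<^sub>M ?M2) \<in> sets (?M1 \<Otimes>\<^sub>M ?M2)"
    by (rule measurable_sets[OF measurable_fst]) simp
  ultimately have "AE x in ?M1 \<Otimes>\<^sub>M ?M2. 0 \<le> fst x"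
    by (intro AE_pair_measure) (auto simp: eventually_mono)
  then show ?thesis unfolding mark_measure_def .
qed



lemma move_diff: "\<bar>real (move route x j i q r) - real (x q r)\<bar> \<le> 1"
  unfolding move_def by (cases "r = i"; cases "q = j"; cases "q = nxt (route i) j") (auto simp: of_nat_diff)
lemma step_diff: "\<bar>real (step route x e u q r) - real (x q r)\<bar> \<le> 1"
  unfolding step_def using move_diff by (cases e) auto

lemma jchain_diff:
  "a \<le> b \<Longrightarrow> \<bar>real (jchain route x0 \<omega> b q r) - real (jchain route x0 \<omega> a q r)\<bar> \<le> real (b - a)"
proof (induction b)
  case 0 then show ?case by simp
next
  case (Suc b)
  show ?case
  proof (cases "a = Suc b")
    case False
    then have "a \<le> b" using Suc by simp
    with Suc.IH have "\<bar>real (jchain route x0 \<omega> b q r) - real (jchain route x0 \<omega> a q r)\<bar> \<le> real (b - a)" by simp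
    moreover have "\<bar>real (jchain route x0 \<omega> (Suc b) q r) - real (jchain route x0 \<omega> b q r)\<bar> \<le> 1"
      by (simp add: step_diff)
    ultimately show ?thesis using \<open>a \<le> b\<close> by (simp add: of_nat_diff)
  qed simp
qed

lemma jump_time_mono:
  assumes "\<forall>l. 0 \<le> fst (\<omega> !! l)" "k \<le> k'"
  shows "jump_time \<omega> k \<le> jump_time \<omega> k'"
  unfolding jump_time_def using assms
  by (intro sum_mono2) auto

lemma njumps_bound:
  assumes nn: "\<forall>l. 0 \<le> fst (\<omega> !! l)"
    and G1: "x2 < jump_time \<omega> N"
    and G2: "\<forall>K<N. x2 - x1 < jump_time \<omega> (K + m) - jump_time \<omega> K"
    and le: "x1 \<le> x2"
  shows "njumps \<omega> x1 \<le> njumps \<omega> x2 \<and> njumps \<omega> x2 \<le> njumps \<omega> x1 + m"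
proof -
  define S where "S = jump_time \<omega>"
  have mono: "k \<le> k' \<Longrightarrow> S k \<le> S k'" for k k'
    unfolding S_def using jump_time_mono[OF nn] by blast
  define B where "B x = {k. S (Suc k) \<le> x}" for x
  have nj: "njumps \<omega> x = card (B x)" for x
    unfolding njumps_def B_def S_def ..
  have bnd: "k \<in> B x2 \<Longrightarrow> Suc k < N" for k
  proof (rule ccontr)
    assume "k \<in> B x2" "\<not> Suc k < N"
    then have "S N \<le> S (Suc k)" "S (Suc k) \<le> x2" using mono unfolding B_def by auto
    with G1 show False unfolding S_def by simp
  qed
  have down: "k \<in> B x \<Longrightarrow> k' \<le> k \<Longrightarrow> k' \<in> B x" for k k' x
    unfolding B_def using mono[of "Suc k'" "Suc k"] by auto
  have "B x2 \<subseteq> {..<N}"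
  proof
    fix k assume "k \<in> B x2"
    then have "Suc k < N" by (rule bnd)
    then show "k \<in> {..<N}" by simp
  qed
  then have fin2: "finite (B x2)" using finite_subset by blast
  have sub: "B x1 \<subseteq> B x2" unfolding B_def using le by auto
  then have fin1: "finite (B x1)" using fin2 finite_subset by blast
  have 1: "card (B x1) \<le> card (B x2)" using card_mono[OF fin2 sub] .
  define a where "a = card (B x1)"
  have 2: "card (B x2) \<le> a + m"
  proof (rule ccontr)
    assume H: "\<not> card (B x2) \<le> a + m"
    have in2: "a + m \<in> B x2"
    proof (rule ccontr)
      assume "a + m \<notin> B x2"
      then have "B x2 \<subseteq> {..<a + m}" using down by (metis lessThan_iff not_le subsetI)
      then have "card (B x2) \<le> a + m" using card_mono[of "{..<a+m}"] by fastforce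
      with H show False by simp
    qed
    have nin1: "a \<notin> B x1"
    proof
      assume "a \<in> B x1"
      then have "{..a} \<subseteq> B x1" using down by auto
      then have "card {..a} \<le> card (B x1)" using card_mono[OF fin1] by blast
      then show False unfolding a_def by simp
    qed
    have "Suc (a + m) < N" using bnd[OF in2] .
    then have "Suc a < N" by simp
    with G2 have "x2 - x1 < S (Suc a + m) - S (Suc a)" unfolding S_def by blast
    moreover have "S (Suc a + m) \<le> x2" using in2 unfolding B_def by simp
    moreover have "x1 < S (Suc a)" using nin1 unfolding B_def by simp
    ultimately show False by simp
  qed
  show ?thesis using 1 2 unfolding nj a_def by simp
qed



lemma chernoff:
  assumes P: "prob_space M" and [measurable]: "f \<in> borel_measurable M" and a: "0 \<le> a"
    and q: "(\<integral>\<^sup>+\<omega>. ennreal (exp (- a * f \<omega>)) \<partial>M) = ennreal q" and q0: "0 \<le> q"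
  shows "measure M {\<omega>\<in>space M. f \<omega> \<le> b} \<le> exp (a * b) * q"
proof -
  interpret prob_space M by (rule P)
  have "emeasure M {\<omega>\<in>space M. f \<omega> \<le> b} = (\<integral>\<^sup>+\<omega>. indicator {\<omega>\<in>space M. f \<omega> \<le> b} \<omega> \<partial>M)"
    by (rule nn_integral_indicator[symmetric]) measurable
  also have "\<dots> \<le> (\<integral>\<^sup>+\<omega>. ennreal (exp (a * b)) * ennreal (exp (- a * f \<omega>)) \<partial>M)"
  proof (rule nn_integral_mono)
    fix \<omega> assume "\<omega> \<in> space M"
    show "indicator {\<omega>\<in>space M. f \<omega> \<le> b} \<omega> \<le> ennreal (exp (a * b)) * ennreal (exp (- a * f \<omega>))"
    proof (cases "f \<omega> \<le> b")
      case True
      then have "0 \<le> a * b + (- a * f \<omega>)" using a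
        by (simp add: algebra_simps mult_left_mono)
      then have "1 \<le> exp (a * b) * exp (- a * f \<omega>)" by (simp add: exp_add[symmetric])
      then show ?thesis by (simp add: ennreal_mult[symmetric] indicator_def)
    qed (simp add: indicator_def)
  qed
  also have "\<dots> = ennreal (exp (a * b)) * ennreal q"
    by (subst nn_integral_cmult) (simp_all add: q[simplified])
  finally have "emeasure M {\<omega>\<in>space M. f \<omega> \<le> b} \<le> ennreal (exp (a * b) * q)"
    using q0 by (simp add: ennreal_mult)
  then show ?thesis
    using q0 by (simp add: measure_def enn2real_leI)
qed

lemma jump_time_sdrop: "jump_time \<omega> (K + m) - jump_time \<omega> K = jump_time (sdrop K \<omega>) m"
  unfolding jump_time_def by (induction m) (simp_all add: sdrop_snth)

theorem proposition4:
  fixes route :: "'r::finite \<Rightarrow> 'q::finite list"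
    and \<mu> :: "'q \<Rightarrow> 'r \<Rightarrow> real"
    and n :: "'q \<Rightarrow> 'r \<Rightarrow> nat"
    and j :: 'q and i :: 'r and T \<eta> \<epsilon> :: real
  assumes "\<forall>i. distinct (route i)"
    and "\<forall>i. \<forall>j\<in>set (route i). 0 < \<mu> j i"
    and "\<forall>i j. j \<notin> set (route i) \<longrightarrow> n j i = 0"
    and "j \<in> set (route i)"
    and "0 < T" and "0 < \<eta>" and "0 < \<epsilon>"
  shows "\<exists>\<delta>>0. \<exists>c0::nat. \<forall>c\<ge>c0. \<exists>A\<in>sets (noise_space route \<mu>).
           {\<omega> \<in> space (noise_space route \<mu>).
              \<eta> < modulus (\<lambda>t. Mbar route n c \<omega> t j i) T \<delta>} \<subseteq> A
           \<and> measure (noise_space route \<mu>) A < \<epsilon>"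
proof -
  define \<Lambda> where "\<Lambda> = unif_rate route \<mu>"
  have \<Lambda>pos: "0 < \<Lambda>"
  proof -
    have "\<mu> j i \<le> (\<Sum>j\<in>set (route i). \<mu> j i)"
      using assms(2,4) by (intro member_le_sum) (auto intro: less_imp_le)
    also have "\<dots> \<le> (\<Sum>i\<in>UNIV. \<Sum>j\<in>set (route i). \<mu> j i)"
      using assms(2) by (intro member_le_sum sum_nonneg) (auto intro: less_imp_le)
    finally show ?thesis using assms(2,4) unfolding \<Lambda>_def unif_rate_def by fastforce
  qed
  define Mm where "Mm = mark_measure route \<mu>"
  interpret Mp: prob_space Mm unfolding Mm_def using mark_prob \<Lambda>pos \<Lambda>_def by blast
  have Pdef: "noise_space route \<mu> = stream_space Mm" by (simp add: noise_space_def Mm_def)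
  interpret P: prob_space "stream_space Mm" by (rule Mp.prob_space_stream_space)
  define \<alpha> where "\<alpha> = (exp 1 - 1) * \<Lambda>"
  have \<alpha>0: "0 < \<alpha>" unfolding \<alpha>_def using \<Lambda>pos by simp
  have rat: "\<Lambda> / (\<Lambda> + \<alpha>) = exp (-1)"
    unfolding \<alpha>_def using \<Lambda>pos by (simp add: exp_minus field_simps)
  have fstm[measurable]: "fst \<in> borel_measurable Mm" unfolding Mm_def by (rule mark_fst)
  have mom: "(\<integral>\<^sup>+x. ennreal (exp (- \<alpha> * fst x)) \<partial>Mm) = ennreal (exp (-1))"
    using mark_exp[of route \<mu> \<alpha>] \<Lambda>pos \<alpha>0 rat unfolding Mm_def \<Lambda>_def by simp
  have momS: "(\<integral>\<^sup>+\<omega>. ennreal (exp (- \<alpha> * jump_time \<omega> m)) \<partial>stream_space Mm) = ennreal (exp (- real m))" for m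
  proof -
    have "exp (- real m) = exp (-1) ^ m" by (metis exp_of_nat_mult mult_minus1_right)
    then show ?thesis
      using nn_exp_jump_time[OF Mp.prob_space_axioms fstm mom, of m] by (simp add: ennreal_power)
  qed
  have mJ[measurable]: "(\<lambda>\<omega>. jump_time \<omega> m) \<in> borel_measurable (stream_space Mm)" for m
    by (rule measurable_jump_time) (rule fstm)
  have chS: "measure (stream_space Mm) {\<omega>\<in>space (stream_space Mm). jump_time \<omega> m \<le> b} \<le> exp (\<alpha> * b - m)" for m b
    using chernoff[OF P.prob_space_axioms mJ less_imp_le[OF \<alpha>0] momS]
    by (simp add: mult_exp_exp)
  have chD: "measure (stream_space Mm) {\<omega>\<in>space (stream_space Mm). jump_time (sdrop K \<omega>) m \<le> b} \<le> exp (\<alpha> * b - m)" for K m b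
  proof -
    have mD: "(\<lambda>\<omega>. jump_time (sdrop K \<omega>) m) \<in> borel_measurable (stream_space Mm)"
      by (rule measurable_compose[OF measurable_sdrop mJ])
    have "(\<integral>\<^sup>+\<omega>. ennreal (exp (- \<alpha> * jump_time (sdrop K \<omega>) m)) \<partial>stream_space Mm)
        = (\<integral>\<^sup>+\<omega>. ennreal (exp (- \<alpha> * jump_time \<omega> m)) \<partial>stream_space Mm)"
      by (rule Mp.nn_sdrop[where f = "\<lambda>\<omega>. ennreal (exp (- \<alpha> * jump_time \<omega> m))"]) measurable
    then show ?thesis
      using chernoff[OF P.prob_space_axioms mD less_imp_le[OF \<alpha>0], of "exp (- real m)" b] momS
      by (simp add: mult_exp_exp)
  qed
  have AE1: "AE x in Mm. 0 \<le> fst x"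
    using mark_AE_nonneg[OF \<Lambda>pos[unfolded \<Lambda>_def]] unfolding Mm_def .
  have pr: "Measurable.pred Mm (\<lambda>x. 0 \<le> fst x)" by measurable
  have "AE \<omega> in stream_space Mm. stream_all (\<lambda>x. 0 \<le> fst x) \<omega>"
    by (rule Mp.AE_stream_all[OF pr AE1])
  then obtain N0 where N0: "{\<omega>\<in>space (stream_space Mm). \<not> stream_all (\<lambda>x. 0 \<le> fst x) \<omega>} \<subseteq> N0"
    "emeasure (stream_space Mm) N0 = 0" "N0 \<in> sets (stream_space Mm)"
    by (rule AE_E)
  have mN0: "measure (stream_space Mm) N0 = 0" using N0(2) by (simp add: measure_def)
  define \<delta> where "\<delta> = \<eta> / (2 * \<alpha>)"
  have \<delta>0: "0 < \<delta>" unfolding \<delta>_def using \<alpha>0 assms(6) by simp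
  define g where "g x = exp (- x) + ((\<alpha> * T + 1) * x + 1) * exp (1 - \<eta> * x / 2)" for x :: real
  have l1: "((\<lambda>x::real. x * exp (- (\<eta> / 2) * x)) \<longlongrightarrow> 0) at_top" using assms(6) by real_asymp
  have l2: "((\<lambda>x::real. exp (- (\<eta> / 2) * x)) \<longlongrightarrow> 0) at_top" using assms(6) by real_asymp
  have l3: "((\<lambda>x::real. exp (- x)) \<longlongrightarrow> 0) at_top" by real_asymp
  have geq: "g = (\<lambda>x. exp (- x) + ((\<alpha> * T + 1) * exp 1) * (x * exp (- (\<eta> / 2) * x)) + exp 1 * exp (- (\<eta> / 2) * x))"
  proof (rule ext)
    fix x :: real
    have e: "exp (1 - \<eta> * x / 2) = exp 1 * exp (- (\<eta> / 2) * x)"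
      by (simp add: mult_exp_exp)
    show "g x = exp (- x) + ((\<alpha> * T + 1) * exp 1) * (x * exp (- (\<eta> / 2) * x)) + exp 1 * exp (- (\<eta> / 2) * x)"
      unfolding g_def e by (simp add: algebra_simps)
  qed
  have "(g \<longlongrightarrow> 0 + (\<alpha> * T + 1) * exp 1 * 0 + exp 1 * 0) at_top"
    unfolding geq by (intro tendsto_add tendsto_mult tendsto_const l1 l2 l3)
  then have "(g \<longlongrightarrow> 0) at_top" by simp
  then have "((\<lambda>c::nat. g (real c)) \<longlongrightarrow> 0) sequentially"
    by (rule filterlim_compose[OF _ filterlim_real_sequentially])
  then have "eventually (\<lambda>c::nat. g (real c) < \<epsilon>) sequentially"
    using assms(7) by (rule order_tendstoD(2))
  then obtain c1 where c1: "\<And>c. c \<ge> c1 \<Longrightarrow> g (real c) < \<epsilon>"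
    unfolding eventually_sequentially by blast
  show ?thesis
  proof (intro exI[of _ \<delta>] conjI \<delta>0 exI[of _ "max c1 1"] allI impI)
    fix c :: nat assume cge: "max c1 1 \<le> c"
    define rc where "rc = real c"
    have rc1: "1 \<le> rc" using cge unfolding rc_def by simp
    define N where "N = nat \<lceil>(\<alpha> * T + 1) * rc\<rceil>"
    define m where "m = nat \<lfloor>\<eta> * rc\<rfloor>"
    have Nge: "(\<alpha> * T + 1) * rc \<le> real N" unfolding N_def by linarith
    have Nle: "real N \<le> (\<alpha> * T + 1) * rc + 1"
      unfolding N_def using \<alpha>0 assms(5) rc1 by (simp add: of_nat_nat)
    have mle: "real m \<le> \<eta> * rc" unfolding m_def using assms(6) rc1 by (simp add: of_nat_nat)
    have mge: "\<eta> * rc - 1 \<le> real m" unfolding m_def using assms(6) rc1 by linarith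
    define B1 where "B1 = {\<omega>\<in>space (stream_space Mm). jump_time \<omega> N \<le> rc * T}"
    define B2 where "B2 K = {\<omega>\<in>space (stream_space Mm). jump_time (sdrop K \<omega>) m \<le> rc * \<delta>}" for K
    define A where "A = N0 \<union> B1 \<union> (\<Union>K\<in>{..<N}. B2 K)"
    have B1s: "B1 \<in> sets (stream_space Mm)" unfolding B1_def by measurable
    have B2s: "B2 K \<in> sets (stream_space Mm)" for K
    proof -
      have "(\<lambda>\<omega>. jump_time (sdrop K \<omega>) m) \<in> borel_measurable (stream_space Mm)"
        by (rule measurable_compose[OF measurable_sdrop mJ])
      then show ?thesis unfolding B2_def by measurable
    qed
    have As: "A \<in> sets (stream_space Mm)" unfolding A_def using N0(3) B1s B2s by auto
    have incl: "{\<omega> \<in> space (stream_space Mm). \<eta> < modulus (\<lambda>t. Mbar route n c \<omega> t j i) T \<delta>} \<subseteq> A"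
    proof (rule subsetI, rule ccontr)
      fix \<omega> assume om: "\<omega> \<in> {\<omega> \<in> space (stream_space Mm). \<eta> < modulus (\<lambda>t. Mbar route n c \<omega> t j i) T \<delta>}"
        and nA: "\<omega> \<notin> A"
      have sp: "\<omega> \<in> space (stream_space Mm)" using om by simp
      have nn: "\<forall>l. 0 \<le> fst (\<omega> !! l)" using nA N0(1) sp unfolding A_def stream_all_def by blast
      have G1: "rc * T < jump_time \<omega> N" using nA sp unfolding A_def B1_def by auto
      have G2: "\<forall>K<N. rc * \<delta> < jump_time \<omega> (K + m) - jump_time \<omega> K"
      proof (intro allI impI)
        fix K assume "K < N"
        then have "\<not> jump_time (sdrop K \<omega>) m \<le> rc * \<delta>" using nA sp unfolding A_def B2_def by auto
        then show "rc * \<delta> < jump_time \<omega> (K + m) - jump_time \<omega> K" unfolding jump_time_sdrop by simp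
      qed
      define f where "f t = Mbar route n c \<omega> t j i" for t
      have key: "\<bar>f t - f s\<bar> \<le> \<eta>" if st: "s \<in> {0..T}" "t \<in> {0..T}" "s \<le> t" "t - s < \<delta>" for s t
      proof -
        have x2: "rc * t < jump_time \<omega> N" using G1 st rc1 by (smt (verit) mult_left_mono atLeastAtMost_iff)
        have "rc * t - rc * s < rc * \<delta>" using st rc1 by (simp add: right_diff_distrib[symmetric])
        then have G2': "\<forall>K<N. rc * t - rc * s < jump_time \<omega> (K + m) - jump_time \<omega> K"
          using G2 by force
        have le: "rc * s \<le> rc * t" using st rc1 by simp
        define a where "a = njumps \<omega> (rc * s)"
        define b where "b = njumps \<omega> (rc * t)"
        have ab: "a \<le> b" "b \<le> a + m"
          using njumps_bound[OF nn x2 G2' le] unfolding a_def b_def by auto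
        define x0 where "x0 = (\<lambda>q r. c * n q r)"
        have "f t - f s = (real (jchain route x0 \<omega> b j i) - real (jchain route x0 \<omega> a j i)) / rc"
          unfolding f_def Mbar_def net_proc_def a_def b_def x0_def rc_def by (simp add: diff_divide_distrib)
        then have "\<bar>f t - f s\<bar> = \<bar>real (jchain route x0 \<omega> b j i) - real (jchain route x0 \<omega> a j i)\<bar> / rc"
          using rc1 by simp
        also have "\<dots> \<le> real (b - a) / rc"
          using jchain_diff[OF ab(1), of route x0 \<omega> j i] rc1 by (intro divide_right_mono) auto
        also have "\<dots> \<le> real m / rc" using ab rc1 by (intro divide_right_mono) auto
        also have "\<dots> \<le> \<eta>" using mle rc1 by (simp add: divide_le_eq mult.commute)
        finally show ?thesis .
      qed
      have "modulus f T \<delta> \<le> \<eta>"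
        unfolding modulus_def
      proof (rule cSup_least)
        show "{\<bar>f t - f s\<bar> |s t. s \<in> {0..T} \<and> t \<in> {0..T} \<and> \<bar>t - s\<bar> < \<delta>} \<noteq> {}"
          using assms(5) \<delta>0 by (auto intro!: exI[of _ 0])
      next
        fix x assume "x \<in> {\<bar>f t - f s\<bar> |s t. s \<in> {0..T} \<and> t \<in> {0..T} \<and> \<bar>t - s\<bar> < \<delta>}"
        then obtain s t where x: "x = \<bar>f t - f s\<bar>" "s \<in> {0..T}" "t \<in> {0..T}" "\<bar>t - s\<bar> < \<delta>" by blast
        show "x \<le> \<eta>"
        proof (cases "s \<le> t")
          case True then show ?thesis using key[of s t] x by simp
        next
          case False then show ?thesis using key[of t s] x by (simp add: abs_minus_commute)
        qed
      qed
      then show False using om unfolding f_def by simp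
    qed
    have "measure (stream_space Mm) A \<le> measure (stream_space Mm) (N0 \<union> B1) + measure (stream_space Mm) (\<Union>K\<in>{..<N}. B2 K)"
      unfolding A_def by (rule measure_Un_le) (use N0(3) B1s B2s in auto)
    also have "measure (stream_space Mm) (N0 \<union> B1) \<le> measure (stream_space Mm) N0 + measure (stream_space Mm) B1"
      by (rule measure_Un_le) (use N0(3) B1s in auto)
    also have "measure (stream_space Mm) (\<Union>K\<in>{..<N}. B2 K) \<le> (\<Sum>K\<in>{..<N}. measure (stream_space Mm) (B2 K))"
      by (rule measure_UNION_le) (use B2s in auto)
    also have "(\<Sum>K\<in>{..<N}. measure (stream_space Mm) (B2 K)) \<le> (\<Sum>K\<in>{..<N}. exp (1 - \<eta> * rc / 2))"
    proof (rule sum_mono)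
      fix K
      have "measure (stream_space Mm) (B2 K) \<le> exp (\<alpha> * (rc * \<delta>) - m)" unfolding B2_def by (rule chD)
      also have "\<alpha> * (rc * \<delta>) = \<eta> * rc / 2" unfolding \<delta>_def using \<alpha>0 by (simp add: field_simps)
      also have "exp (\<eta> * rc / 2 - m) \<le> exp (1 - \<eta> * rc / 2)" using mge by simp
      finally show "measure (stream_space Mm) (B2 K) \<le> exp (1 - \<eta> * rc / 2)" .
    qed
    also have "measure (stream_space Mm) B1 \<le> exp (- rc)"
    proof -
      have "measure (stream_space Mm) B1 \<le> exp (\<alpha> * (rc * T) - N)" unfolding B1_def by (rule chS)
      also have "\<dots> \<le> exp (- rc)" using Nge by (simp add: algebra_simps)
      finally show ?thesis .
    qed
    finally have "measure (stream_space Mm) A \<le> exp (- rc) + real N * exp (1 - \<eta> * rc / 2)"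
      using mN0 by simp
    also have "\<dots> \<le> g rc" unfolding g_def using Nle by (intro add_left_mono mult_right_mono) auto
    also have "\<dots> < \<epsilon>" using c1[of c] cge unfolding rc_def by simp
    finally have "measure (stream_space Mm) A < \<epsilon>" .
    then show "\<exists>A\<in>sets (noise_space route \<mu>).
           {\<omega> \<in> space (noise_space route \<mu>).
              \<eta> < modulus (\<lambda>t. Mbar route n c \<omega> t j i) T \<delta>} \<subseteq> A
           \<and> measure (noise_space route \<mu>) A < \<epsilon>"
      using As incl unfolding Pdef by blast
  qed
qed

end
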